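(* Consider a clustered gossip network with $m$ clusters of $k$ end-nodes each, as described in the context. Let $F_c$ denote the average binary freshness $\lim_{t\to\infty}\mathbb{E}[F_c(t)]$ of a cluster head, and for a nonempty subset $S$ of the end-nodes of a single cluster let $F_S=\lim_{t\to\infty}\mathbb{E}[\max_{j\in S}F_j(t)]$. Then $$F_S=\frac{\lambda_c(S)F_c+\sum_{i\in N(S)}\lambda_i(S)F_{S\cup\{i\}}}{\lambda_e+\lambda_c(S)+\sum_{i\in N(S)}\lambda_i(S)},\qquad F_c=\frac{\lambda_s}{\lambda_s+m\lambda_e}.$$
   Context: Model: The information at a source is updated (a new version is generated) according to a Poisson process of rate $\lambda_e>0$. There are $n=km$ end-nodes partitioned into $m$ clusters of $k$ nodes each, and each cluster has a cluster head. The source sends its current version to each cluster head according to a Poisson process of rate $\lambda_s/m$; each cluster head sends its stored version to each of the $k$ end-nodes of its own cluster according to a Poisson process of rate $\lambda_c/k$; an end-node $i$ sends its stored version to an end-node $j\ne i$ of the same cluster according to a Poisson process of rate $\lambda_{ij}\ge0$ (there is no gossip between different clusters, and cluster heads receive only from the source). All processes are independent. A node receiving a version keeps the fresher of its stored and received versions. The binary freshness $F_x(t)$ of a node (end-node or cluster head) $x$ is $1$ if it stores the current source version at time $t$ and $0$ otherwise. Notation for a subset $S$ of end-nodes of one cluster: $\lambda_c(S)$ is the total update rate from that cluster's head into $S$ (equal to $|S|\lambda_c/k$); for an end-node $i\notin S$, $\lambda_i(S)=\sum_{j\in S}\lambda_{ij}$; $N(S)=\{i\notin S:\lambda_i(S)>0\}$.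 *)

theory Defs
  imports Complex_Main
begin

text \<open>
Clusters are indexed by c < m, end-nodes of cluster c by
i < k.  The whole network is driven by independent Poisson clocks, one per event type
below; the state records version numbers (source, cluster heads, end-nodes).
\<close>

datatype ev =
    Upd                       \<comment> \<open>new version at the source, rate le\<close>
  | SH nat                    \<comment> \<open>source to head of cluster c, rate ls/m\<close>
  | HN nat nat                \<comment> \<open>head of cluster c to its end-node i, rate lc/k\<close>
  | G nat nat nat             \<comment> \<open>in cluster c, end-node i to end-node j (i ~= j), rate lg c i j\<close>

type_synonym state = "nat \<times> (nat \<Rightarrow> nat) \<times> (nat \<Rightarrow> nat \<Rightarrow> nat)"
  \<comment> \<open>(source version, head versions, end-node versions: node c i)\<close>

definition events :: "nat \<Rightarrow> nat \<Rightarrow> ev set" where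
  "events m k = {Upd} \<union> SH ` {..<m} \<union> {HN c i |c i. c < m \<and> i < k}
      \<union> {G c i j |c i j. c < m \<and> i < k \<and> j < k \<and> i \<noteq> j}"

fun rate :: "real \<Rightarrow> real \<Rightarrow> real \<Rightarrow> (nat \<Rightarrow> nat \<Rightarrow> nat \<Rightarrow> real) \<Rightarrow> nat \<Rightarrow> nat \<Rightarrow> ev \<Rightarrow> real" where
  "rate le ls lc lg m k Upd = le"
| "rate le ls lc lg m k (SH c) = ls / real m"
| "rate le ls lc lg m k (HN c i) = lc / real k"
| "rate le ls lc lg m k (G c i j) = lg c i j"

text \<open>Effect of an event: the receiver keeps the fresher (larger) version.\<close>
fun act :: "ev \<Rightarrow> state \<Rightarrow> state" where
  "act Upd (v, h, x) = (Suc v, h, x)"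
| "act (SH c) (v, h, x) = (v, h(c := max (h c) v), x)"
| "act (HN c i) (v, h, x) = (v, h, x(c := (x c)(i := max (x c i) (h c))))"
| "act (G c i j) (v, h, x) = (v, h, x(c := (x c)(j := max (x c j) (x c i))))"

definition total_rate :: "real \<Rightarrow> real \<Rightarrow> real \<Rightarrow> (nat \<Rightarrow> nat \<Rightarrow> nat \<Rightarrow> real) \<Rightarrow> nat \<Rightarrow> nat \<Rightarrow> real" where
  "total_rate le ls lc lg m k = (\<Sum>e\<in>events m k. rate le ls lc lg m k e)"

text \<open>One-step transition operator of the embedded jump chain (uniformization):
  acting on observables g.\<close>
definition step_op :: "real \<Rightarrow> real \<Rightarrow> real \<Rightarrow> (nat \<Rightarrow> nat \<Rightarrow> nat \<Rightarrow> real) \<Rightarrow> nat \<Rightarrow> nat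
    \<Rightarrow> (state \<Rightarrow> real) \<Rightarrow> state \<Rightarrow> real" where
  "step_op le ls lc lg m k g s =
     (\<Sum>e\<in>events m k. rate le ls lc lg m k e / total_rate le ls lc lg m k * g (act e s))"

definition init_state :: state where "init_state = (0, \<lambda>_. 0, \<lambda>_ _. 0)"

text \<open>Expectation E[g(X(t))] of an observable at time t: superposition of the
  independent Poisson clocks is a Poisson process of total rate L whose event marks
  are i.i.d. with law rate/L, hence
  E[g(X(t))] = sum_n exp(-L t) (L t)^n / n! * (T^n g)(X(0)).\<close>
definition expect_at :: "real \<Rightarrow> real \<Rightarrow> real \<Rightarrow> (nat \<Rightarrow> nat \<Rightarrow> nat \<Rightarrow> real) \<Rightarrow> nat \<Rightarrow> nat
    \<Rightarrow> real \<Rightarrow> (state \<Rightarrow> real) \<Rightarrow> real" where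
  "expect_at le ls lc lg m k t g =
     (let L = total_rate le ls lc lg m k in
      (\<Sum>n. exp (- L * t) * (L * t) ^ n / fact n * ((step_op le ls lc lg m k ^^ n) g) init_state))"

text \<open>Binary freshness of the head of cluster c, and max_{j in S} F_j for end-nodes of cluster c.\<close>
definition head_fresh :: "nat \<Rightarrow> state \<Rightarrow> real" where
  "head_fresh c s = (case s of (v, h, x) \<Rightarrow> if h c = v then 1 else 0)"

definition set_fresh :: "nat \<Rightarrow> nat set \<Rightarrow> state \<Rightarrow> real" where
  "set_fresh c S s = (case s of (v, h, x) \<Rightarrow> if (\<exists>j\<in>S. x c j = v) then 1 else 0)"

definition F_head where
  "F_head le ls lc lg m k c = Lim at_top (\<lambda>t. expect_at le ls lc lg m k t (head_fresh c))"

definition F_set where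
  "F_set le ls lc lg m k c S = Lim at_top (\<lambda>t. expect_at le ls lc lg m k t (set_fresh c S))"

definition lam_in :: "(nat \<Rightarrow> nat \<Rightarrow> nat \<Rightarrow> real) \<Rightarrow> nat \<Rightarrow> nat \<Rightarrow> nat set \<Rightarrow> real" where
  "lam_in lg c i S = (\<Sum>j\<in>S. lg c i j)"

definition nbrs :: "(nat \<Rightarrow> nat \<Rightarrow> nat \<Rightarrow> real) \<Rightarrow> nat \<Rightarrow> nat \<Rightarrow> nat set \<Rightarrow> nat set" where
  "nbrs lg k c S = {i. i < k \<and> i \<notin> S \<and> lam_in lg c i S > 0}"

end

theory Submission
  imports Defs
begin


lemma rec_lim:
  fixes a u :: "nat \<Rightarrow> real"
  assumes r0: "0 \<le> \<rho>" and r1: "\<rho> < 1" and rec: "\<And>n. a (Suc n) = \<rho> * a n + u n" and u: "u \<longlonglongrightarrow> U"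
  shows "a \<longlonglongrightarrow> U / (1 - \<rho>)"
proof -
  define e where "e n = a n - U / (1 - \<rho>)" for n
  define w where "w n = u n - U" for n
  have erec: "e (Suc n) = \<rho> * e n + w n" for n
    unfolding e_def w_def rec using r1 by (simp add: field_simps)
  have w0: "w \<longlonglongrightarrow> 0" unfolding w_def using u by (simp add: LIM_zero)
  have "e \<longlonglongrightarrow> 0"
  proof (rule LIMSEQ_I)
    fix \<epsilon> :: real assume \<epsilon>: "\<epsilon> > 0"
    have "\<epsilon> * (1 - \<rho>) / 2 > 0" using \<epsilon> r1 by simp
    from LIMSEQ_D[OF w0 this] obtain N where N0: "\<And>n. n \<ge> N \<Longrightarrow> norm (w n - 0) < \<epsilon> * (1 - \<rho>) / 2"
      by auto
    have N: "\<And>n. n \<ge> N \<Longrightarrow> norm (w n) < \<epsilon> * (1 - \<rho>) / 2" using N0 by simp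
    have bound: "\<bar>e (N + j)\<bar> \<le> \<rho> ^ j * \<bar>e N\<bar> + \<epsilon> / 2" for j
    proof (induction j)
      case 0 then show ?case using \<epsilon> by simp
    next
      case (Suc j)
      have "\<bar>e (N + Suc j)\<bar> \<le> \<rho> * \<bar>e (N + j)\<bar> + \<bar>w (N + j)\<bar>"
        using erec[of "N + j"] r0 by (simp add: abs_mult abs_triangle_ineq[THEN order_trans])
      also have "\<dots> \<le> \<rho> * (\<rho> ^ j * \<bar>e N\<bar> + \<epsilon> / 2) + \<epsilon> * (1 - \<rho>) / 2"
        using Suc r0 N[of "N + j"] by (intro add_mono mult_left_mono) auto
      also have "\<dots> = \<rho> ^ Suc j * \<bar>e N\<bar> + \<epsilon> / 2" by (simp add: field_simps)
      finally show ?case .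
    qed
    have "(\<lambda>j. \<rho> ^ j * \<bar>e N\<bar>) \<longlonglongrightarrow> 0"
      using r0 r1 by (intro tendsto_mult_left_zero LIMSEQ_power_zero) auto
    from LIMSEQ_D[OF this, of "\<epsilon> / 2"] \<epsilon> obtain J where J: "\<And>j. j \<ge> J \<Longrightarrow> norm (\<rho> ^ j * \<bar>e N\<bar> - 0) < \<epsilon> / 2"
      by auto
    show "\<exists>no. \<forall>n\<ge>no. norm (e n - 0) < \<epsilon>"
    proof (intro exI allI impI)
      fix n assume "n \<ge> N + J"
      define j where "j = n - N"
      have n: "n = N + j" and "j \<ge> J" using \<open>n \<ge> N + J\<close> unfolding j_def by auto
      then have "\<rho> ^ j * \<bar>e N\<bar> < \<epsilon> / 2" using J by fastforce
      then show "norm (e n - 0) < \<epsilon>" using bound[of j] n by simp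
    qed
  qed
  then have "(\<lambda>n. e n + U / (1 - \<rho>)) \<longlonglongrightarrow> 0 + U / (1 - \<rho>)" by (intro tendsto_add) auto
  then show ?thesis unfolding e_def by simp
qed

lemma w_sums: "(\<lambda>n. exp (- L * t) * (L * t) ^ n / fact n) sums (1::real)"
proof -
  have "(\<lambda>n. (L * t) ^ n / fact n) sums exp (L * t)"
    using exp_converges[of "L * t"] by (simp add: divide_inverse_commute scaleR_conv_of_real)
  from sums_mult[OF this, of "exp (- L * t)"] show ?thesis
    by (simp add: exp_minus_inverse mult.assoc times_divide_eq_right exp_minus field_simps)
qed

lemma w_lim: "(L::real) > 0 \<Longrightarrow> ((\<lambda>t. exp (- L * t) * (L * t) ^ n / fact n) \<longlongrightarrow> 0) at_top"
proof -
  assume L: "L > 0"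
  have f: "filterlim (\<lambda>t. L * t) at_top at_top"
    using L by (intro filterlim_tendsto_pos_mult_at_top[OF tendsto_const] filterlim_ident)
  have "((\<lambda>t. (L * t) ^ n / exp (L * t)) \<longlongrightarrow> 0) at_top"
    using filterlim_compose[OF tendsto_power_div_exp_0 f] by simp
  then have "((\<lambda>t. (L * t) ^ n / exp (L * t) / fact n) \<longlongrightarrow> 0 / fact n) at_top"
    by (intro tendsto_divide) auto
  then show ?thesis by (simp add: exp_minus field_simps)
qed

lemma poisson_lim:
  fixes a :: "nat \<Rightarrow> real"
  assumes L: "L > 0" and a: "a \<longlonglongrightarrow> A"
  shows "((\<lambda>t. \<Sum>n. exp (- L * t) * (L * t) ^ n / fact n * a n) \<longlongrightarrow> A) at_top"
proof -
  define w where "w t n = exp (- L * t) * (L * t) ^ n / fact n" for t n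
  define cc where "cc n = a n - A" for n
  have c0: "cc \<longlonglongrightarrow> 0" unfolding cc_def using a by (simp add: LIM_zero)
  obtain B where B: "B > 0" "\<And>n. norm (cc n) \<le> B"
    using convergent_imp_Bseq[of cc] c0 unfolding Bseq_def convergent_def by blast
  have ws: "w t sums 1" for t unfolding w_def by (rule w_sums)
  have wnn: "t \<ge> 0 \<Longrightarrow> w t n \<ge> 0" for t n unfolding w_def using L by simp
  have sumca: "summable (\<lambda>n. \<bar>w t n * cc n\<bar>)" if "t \<ge> 0" for t
  proof (rule summable_rabs_comparison_test[where g = "\<lambda>n. B * w t n"])
    show "\<exists>N. \<forall>n\<ge>N. \<bar>w t n * cc n\<bar> \<le> B * w t n"
    proof (intro exI allI impI)
      fix n :: nat
      have "\<bar>cc n\<bar> * w t n \<le> B * w t n" using B(2)[of n] wnn[OF that, of n] by (intro mult_right_mono) auto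
      then show "\<bar>w t n * cc n\<bar> \<le> B * w t n" using wnn[OF that, of n] by (simp add: abs_mult mult.commute)
    qed
    show "summable (\<lambda>n. B * w t n)" by (intro summable_mult sums_summable[OF ws])
  qed
  have sumc: "summable (\<lambda>n. w t n * cc n)" if "t \<ge> 0" for t
    using summable_rabs_cancel[OF sumca[OF that]] .
  have main: "((\<lambda>t. \<Sum>n. w t n * cc n) \<longlongrightarrow> 0) at_top"
  proof (rule tendstoI)
    fix \<epsilon> :: real assume \<epsilon>: "\<epsilon> > 0"
    from LIMSEQ_D[OF c0, of "\<epsilon> / 2"] \<epsilon> obtain N where N0: "\<And>n. n \<ge> N \<Longrightarrow> norm (cc n - 0) < \<epsilon> / 2"
      by auto
    have N: "\<And>n. n \<ge> N \<Longrightarrow> norm (cc n) < \<epsilon> / 2" using N0 by simp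
    have "((\<lambda>t. B * (\<Sum>n<N. w t n)) \<longlongrightarrow> B * 0) at_top"
      unfolding w_def by (intro tendsto_mult tendsto_const tendsto_null_sum w_lim L)
    then have ev: "eventually (\<lambda>t. B * (\<Sum>n<N. w t n) < \<epsilon> / 2) at_top"
      using \<epsilon> unfolding order_tendsto_iff by (metis half_gt_zero mult_zero_right)
    show "eventually (\<lambda>t. dist (\<Sum>n. w t n * cc n) 0 < \<epsilon>) at_top"
      using ev eventually_ge_at_top[of 0]
    proof eventually_elim
      case (elim t)
      define g where "g n = (if n < N then B * w t n else 0) + \<epsilon> / 2 * w t n" for n
      have sg: "g sums (B * (\<Sum>n<N. w t n) + \<epsilon> / 2 * 1)"
        unfolding g_def
        by (intro sums_add sums_mult ws) (simp add: sums_If_finite_set[where A = "{..<N}", simplified] sum_distrib_left)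
      have "\<bar>\<Sum>n. w t n * cc n\<bar> \<le> (\<Sum>n. \<bar>w t n * cc n\<bar>)"
        by (rule summable_rabs) (rule sumca[OF elim(2)])
      also have "\<dots> \<le> (\<Sum>n. g n)"
      proof (rule suminf_le)
        fix n
        show "\<bar>w t n * cc n\<bar> \<le> g n"
        proof (cases "n < N")
          case True
          have "\<bar>cc n\<bar> * w t n \<le> B * w t n" using B(2)[of n] wnn[OF elim(2), of n] by (intro mult_right_mono) auto
          moreover have "0 \<le> \<epsilon> / 2 * w t n" using wnn[OF elim(2), of n] \<epsilon> by simp
          ultimately show ?thesis using True wnn[OF elim(2), of n] unfolding g_def by (simp add: abs_mult mult.commute)
        next
          case False
          have "\<bar>cc n\<bar> * w t n \<le> \<epsilon> / 2 * w t n" using N[of n] False wnn[OF elim(2), of n] by (intro mult_right_mono) auto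
          then show ?thesis using False wnn[OF elim(2), of n] unfolding g_def by (simp add: abs_mult mult.commute)
        qed
      qed (use sumca[OF elim(2)] sg in \<open>auto simp: sums_summable\<close>)
      also have "\<dots> = B * (\<Sum>n<N. w t n) + \<epsilon> / 2" using sg sums_unique by fastforce
      also have "\<dots> < \<epsilon>" using elim(1) by simp
      finally show ?case by simp
    qed
  qed
  have "eventually (\<lambda>t. (\<Sum>n. w t n * cc n) + A = (\<Sum>n. w t n * a n)) at_top"
    using eventually_ge_at_top[of 0]
  proof eventually_elim
    case (elim t)
    have "(\<lambda>n. w t n * cc n + A * w t n) sums ((\<Sum>n. w t n * cc n) + A * 1)"
      by (intro sums_add sums_mult ws summable_sums sumc elim)
    then show ?case unfolding cc_def by (simp add: algebra_simps sums_unique)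
  qed
  moreover have "((\<lambda>t. (\<Sum>n. w t n * cc n) + A) \<longlongrightarrow> 0 + A) at_top"
    by (intro tendsto_add main tendsto_const)
  ultimately have "((\<lambda>t. \<Sum>n. w t n * a n) \<longlongrightarrow> A) at_top"
    using tendsto_cong by fastforce
  then show ?thesis unfolding w_def .
qed



lemma events_alt: "events m k = {Upd} \<union> SH ` {..<m} \<union> (\<lambda>(c,i). HN c i) ` ({..<m} \<times> {..<k})
   \<union> (\<lambda>(c,i,j). G c i j) ` (SIGMA c:{..<m}. SIGMA i:{..<k}. {..<k}-{i})"
proof -
  have eB: "{HN c i |c i. c < m \<and> i < k} = (\<lambda>(c,i). HN c i) ` ({..<m} \<times> {..<k})" by auto
  have eC: "{G c i j |c i j. c < m \<and> i < k \<and> j < k \<and> i \<noteq> j} = (\<lambda>(c,i,j). G c i j) ` (SIGMA c:{..<m}. SIGMA i:{..<k}. {..<k}-{i})" by force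
  show ?thesis unfolding events_def eB eC ..
qed

lemma finite_events: "finite (events m k)"
  unfolding events_alt by auto

lemma Upd_in: "Upd \<in> events m k" unfolding events_def by auto

lemma events_sum:
  fixes \<phi> :: "ev \<Rightarrow> real"
  shows "(\<Sum>e\<in>events m k. \<phi> e) = \<phi> Upd + (\<Sum>c<m. \<phi> (SH c)) + (\<Sum>c<m. \<Sum>i<k. \<phi> (HN c i))
     + (\<Sum>c<m. \<Sum>i<k. \<Sum>j\<in>{..<k}-{i}. \<phi> (G c i j))"
proof -
  define B where "B = (\<lambda>(c,i). HN c i) ` ({..<m} \<times> {..<k})"
  define C where "C = (\<lambda>(c,i,j). G c i j) ` (SIGMA c:{..<m}. SIGMA i:{..<k}. {..<k}-{i})"
  have eB: "{HN c i |c i. c < m \<and> i < k} = B" unfolding B_def by auto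
  have eC: "{G c i j |c i j. c < m \<and> i < k \<and> j < k \<and> i \<noteq> j} = C" unfolding C_def by force
  have ev: "events m k = {Upd} \<union> SH ` {..<m} \<union> B \<union> C" unfolding events_def eB eC ..
  have fB: "finite B" and fC: "finite C" unfolding B_def C_def by auto
  have "(\<Sum>e\<in>events m k. \<phi> e) = (\<Sum>e\<in>{Upd} \<union> SH ` {..<m} \<union> B. \<phi> e) + (\<Sum>e\<in>C. \<phi> e)"
    unfolding ev by (rule sum.union_disjoint) (auto simp: fB fC B_def C_def)
  also have "(\<Sum>e\<in>{Upd} \<union> SH ` {..<m} \<union> B. \<phi> e) = (\<Sum>e\<in>{Upd} \<union> SH ` {..<m}. \<phi> e) + (\<Sum>e\<in>B. \<phi> e)"
    by (rule sum.union_disjoint) (auto simp: fB B_def)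
  also have "(\<Sum>e\<in>{Upd} \<union> SH ` {..<m}. \<phi> e) = \<phi> Upd + (\<Sum>e\<in>SH ` {..<m}. \<phi> e)"
    by (subst sum.union_disjoint) auto
  also have "(\<Sum>e\<in>SH ` {..<m}. \<phi> e) = (\<Sum>c<m. \<phi> (SH c))"
    by (subst sum.reindex) (auto simp: inj_on_def)
  also have "(\<Sum>e\<in>B. \<phi> e) = (\<Sum>(c,i)\<in>{..<m} \<times> {..<k}. \<phi> (HN c i))"
    unfolding B_def by (subst sum.reindex) (auto simp: inj_on_def case_prod_beta)
  also have "\<dots> = (\<Sum>c<m. \<Sum>i<k. \<phi> (HN c i))"
    by (simp add: sum.cartesian_product)
  also have "(\<Sum>e\<in>C. \<phi> e) = (\<Sum>(c,i,j)\<in>(SIGMA c:{..<m}. SIGMA i:{..<k}. {..<k}-{i}). \<phi> (G c i j))"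
    unfolding C_def by (subst sum.reindex) (auto simp: inj_on_def case_prod_beta)
  also have "\<dots> = (\<Sum>c<m. \<Sum>(i,j)\<in>(SIGMA i:{..<k}. {..<k}-{i}). \<phi> (G c i j))"
    by (subst sum.Sigma[symmetric]) auto
  also have "\<dots> = (\<Sum>c<m. \<Sum>i<k. \<Sum>j\<in>{..<k}-{i}. \<phi> (G c i j))"
    by (subst sum.Sigma) auto
  finally show ?thesis by simp
qed

definition inv_st :: "state \<Rightarrow> bool" where
  "inv_st s = (case s of (v,h,x) \<Rightarrow> \<forall>c j. x c j \<le> h c \<and> h c \<le> v)"

lemma inv_init: "inv_st init_state" unfolding inv_st_def init_state_def by simp

lemma inv_act: "inv_st s \<Longrightarrow> inv_st (act e s)"
proof (cases s)
  case (fields v h x)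
  assume a: "inv_st s"
  then have I: "\<And>c j. x c j \<le> h c" "\<And>c. h c \<le> v" using fields unfolding inv_st_def by auto
  show ?thesis
  proof (cases e)
    case Upd then show ?thesis using I fields unfolding inv_st_def by (auto intro: le_SucI)
  next
    case (SH c) then show ?thesis using I fields unfolding inv_st_def
      by clarsimp (metis le_trans max.cobounded1 max.absorb2)
  next
    case (HN c i)
    have "\<forall>c' j'. (x(c := (x c)(i := max (x c i) (h c)))) c' j' \<le> h c' \<and> h c' \<le> v"
      using I by (simp add: fun_upd_apply)
    then show ?thesis using HN fields unfolding inv_st_def by simp
  next
    case (G c i j)
    have "\<forall>c' j'. (x(c := (x c)(j := max (x c j) (x c i)))) c' j' \<le> h c' \<and> h c' \<le> v"
      using I by (simp add: fun_upd_apply)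
    then show ?thesis using G fields unfolding inv_st_def by simp
  qed
qed

lemma alg: "(L::real) > 0 \<Longrightarrow> sf + (le * (0 - sf) + a * (hf - sf) + (P - Q * sf)) / L
     = (1 - (le + a + Q) / L) * sf + a / L * hf + P / L"
    by (simp add: field_simps)

locale net =
  fixes le ls lc :: real and lg :: "nat \<Rightarrow> nat \<Rightarrow> nat \<Rightarrow> real" and m k :: nat
  assumes le: "le > 0" and ls: "ls > 0" and lc: "lc > 0" and lg: "\<And>c' i j. lg c' i j \<ge> 0"
    and m: "m > 0" and k: "k > 0"
begin

abbreviation "L \<equiv> total_rate le ls lc lg m k"
abbreviation "T \<equiv> step_op le ls lc lg m k"
abbreviation "r \<equiv> rate le ls lc lg m k"

lemma r_nonneg: "r e \<ge> 0"
  using le ls lc lg by (cases e) auto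

lemma L_pos: "L > 0"
proof -
  have "r Upd \<le> L" unfolding total_rate_def
    by (rule member_le_sum) (auto simp: Upd_in finite_events r_nonneg)
  then show ?thesis using le by simp
qed

lemma T_def': "T g s = (\<Sum>e\<in>events m k. r e * g (act e s)) / L"
  unfolding step_op_def by (simp add: sum_divide_distrib)

lemma T_delta: "T g s = g s + (\<Sum>e\<in>events m k. r e * (g (act e s) - g s)) / L"
proof -
  have "(\<Sum>e\<in>events m k. r e * (g (act e s) - g s)) = (\<Sum>e\<in>events m k. r e * g (act e s)) - L * g s"
    unfolding total_rate_def by (simp add: algebra_simps sum_subtractf sum_distrib_left)
  then show ?thesis unfolding T_def' using L_pos by (simp add: field_simps)
qed

lemma T_lin: "T (\<lambda>s. a * f s + b * g s) = (\<lambda>s. a * T f s + b * T g s)"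
  unfolding step_op_def by (rule ext) (simp add: distrib_left sum.distrib[symmetric] sum_distrib_left mult_ac add_divide_distrib)

lemma T_sum: "T (\<lambda>s. \<Sum>i\<in>I. h i s) = (\<lambda>s. \<Sum>i\<in>I. T (h i) s)"
  unfolding step_op_def by (auto simp: sum_distrib_left intro!: sum.swap)

lemma T_const: "T (\<lambda>s. a) = (\<lambda>s. a)"
  unfolding step_op_def using L_pos by (auto simp: sum_distrib_right[symmetric] sum_divide_distrib[symmetric] total_rate_def[symmetric])

lemma Tn_lin: "(T ^^ n) (\<lambda>s. a * f s + b * g s) = (\<lambda>s. a * (T ^^ n) f s + b * (T ^^ n) g s)"
  by (induction n) (auto simp: T_lin)

lemma Tn_sum: "(T ^^ n) (\<lambda>s. \<Sum>i\<in>I. h i s) = (\<lambda>s. \<Sum>i\<in>I. (T ^^ n) (h i) s)"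
  by (induction n) (auto simp: T_sum)

lemma Tn_const: "(T ^^ n) (\<lambda>s. a) = (\<lambda>s. a)"
  by (induction n) (auto simp: T_const)

lemma T_cong: "(\<And>s. inv_st s \<Longrightarrow> g1 s = g2 s) \<Longrightarrow> inv_st s \<Longrightarrow> T g1 s = T g2 s"
  unfolding step_op_def by (auto intro!: sum.cong simp: inv_act)

lemma Tn_cong: "(\<And>s. inv_st s \<Longrightarrow> g1 s = g2 s) \<Longrightarrow> inv_st s \<Longrightarrow> (T ^^ n) g1 s = (T ^^ n) g2 s"
proof (induction n arbitrary: s)
  case 0 then show ?case by simp
next
  case (Suc n) then show ?case by (auto intro!: T_cong)
qed

lemma hf_act:
  assumes "inv_st s"
  shows "head_fresh c (act Upd s) = 0"
    "head_fresh c (act (SH c') s) = (if c' = c then 1 else head_fresh c s)"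
    "head_fresh c (act (HN c' i) s) = head_fresh c s"
    "head_fresh c (act (G c' i j) s) = head_fresh c s"
proof -
  obtain v h x where s: "s = (v,h,x)" by (cases s)
  have I: "\<And>c j. x c j \<le> h c" "\<And>c. h c \<le> v" using assms s unfolding inv_st_def by auto
  show "head_fresh c (act Upd s) = 0" using I(2)[of c] s by (auto simp: head_fresh_def)
  show "head_fresh c (act (SH c') s) = (if c' = c then 1 else head_fresh c s)" using I s by (auto simp: head_fresh_def max_def)
  show "head_fresh c (act (HN c' i) s) = head_fresh c s" using s by (auto simp: head_fresh_def)
  show "head_fresh c (act (G c' i j) s) = head_fresh c s" using s by (auto simp: head_fresh_def)
qed

lemma sf_act:
  assumes "inv_st s"
  shows "set_fresh c S (act Upd s) = 0"
    "set_fresh c S (act (SH c') s) = set_fresh c S s"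
    "set_fresh c S (act (HN c' i) s) = (if c' = c \<and> i \<in> S then head_fresh c s else set_fresh c S s)"
    "set_fresh c S (act (G c' i j) s) = (if c' = c \<and> j \<in> S \<and> i \<notin> S then set_fresh c (S \<union> {i}) s else set_fresh c S s)"
proof -
  obtain v h x where s: "s = (v,h,x)" by (cases s)
  have I: "\<And>c j. x c j \<le> h c" "\<And>c. h c \<le> v" using assms s unfolding inv_st_def by auto
  have nf: "x c j \<noteq> Suc v" for j using I(1)[of c j] I(2)[of c] by linarith
  show "set_fresh c S (act Upd s) = 0" using nf s by (simp add: set_fresh_def)
  show "set_fresh c S (act (SH c') s) = set_fresh c S s" using s by (auto simp: set_fresh_def)
  show "set_fresh c S (act (HN c' i) s) = (if c' = c \<and> i \<in> S then head_fresh c s else set_fresh c S s)"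
  proof (cases "c' = c \<and> i \<in> S")
    case True
    have "x c j = v \<Longrightarrow> h c = v" for j using I(1)[of c j] I(2)[of c] by simp
    then show ?thesis using True s I by (auto simp: set_fresh_def head_fresh_def max_def)
  next
    case False then show ?thesis using s by (auto simp: set_fresh_def)
  qed
  show "set_fresh c S (act (G c' i j) s) = (if c' = c \<and> j \<in> S \<and> i \<notin> S then set_fresh c (S \<union> {i}) s else set_fresh c S s)"
  proof (cases "c' = c")
    case False then show ?thesis using s by (simp add: set_fresh_def)
  next
    case True
    define y where "y = (x c)(j := max (x c j) (x c i))"
    have xv: "\<And>j. x c j \<le> v" using I by (meson le_trans)
    have mx: "(max (x c j) (x c i) = v) = (x c j = v \<or> x c i = v)"
      using xv[of j] xv[of i] by (auto simp: max_def)
    have act: "act (G c' i j) s = (v, h, x(c := y))" using s True by (simp add: y_def)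
    have ex: "(\<exists>j'\<in>S. y j' = v) = (if j \<in> S then (\<exists>j'\<in>S. x c j' = v) \<or> x c i = v else (\<exists>j'\<in>S. x c j' = v))"
    proof -
      have "\<And>j'. y j' = v \<longleftrightarrow> (if j' = j then x c j = v \<or> x c i = v else x c j' = v)"
        unfolding y_def using mx by simp
      then show ?thesis by (cases "j \<in> S") (simp; metis)+
    qed
    have iS: "i \<in> S \<Longrightarrow> ((\<exists>j'\<in>S. x c j' = v) \<or> x c i = v) = (\<exists>j'\<in>S. x c j' = v)" by blast
    show ?thesis unfolding act set_fresh_def using ex True s iS
      by (cases "j \<in> S"; cases "i \<in> S") simp_all
  qed
qed

lemma sum_if_eq: fixes f :: "'a \<Rightarrow> real" shows "finite A \<Longrightarrow> (\<Sum>c'\<in>A. f c' * ((if c' = c then X else Y) - Y)) = (if c\<in>A then f c * (X - Y) else 0)"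
proof -
  assume "finite A"
  have "(\<Sum>c'\<in>A. f c' * ((if c' = c then X else Y) - Y)) = (\<Sum>c'\<in>A. if c' = c then f c' * (X - Y) else 0)"
    by (rule sum.cong) simp_all
  then show ?thesis using \<open>finite A\<close> by (simp add: sum.delta)
qed

lemma head_T:
  assumes c: "c < m" and s: "inv_st s"
  shows "T (head_fresh c) s = (1 - (le + ls / m) / L) * head_fresh c s + ls / (m * L)"
proof -
  have sh: "(\<Sum>c'<m. ls / real m * ((if c' = c then 1 else head_fresh c s) - head_fresh c s)) = ls / m * (1 - head_fresh c s)"
    by (subst sum_if_eq) (auto simp: c)
  have D: "(\<Sum>e\<in>events m k. r e * (head_fresh c (act e s) - head_fresh c s))
      = le * (0 - head_fresh c s) + ls / m * (1 - head_fresh c s)"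
    unfolding events_sum hf_act[OF s] rate.simps sh by simp
  show ?thesis unfolding T_delta D using L_pos m by (simp add: field_simps)
qed

lemma lam_nonneg: "lam_in lg c i S \<ge> 0"
  unfolding lam_in_def by (rule sum_nonneg) (simp add: lg)

lemma HN_sum:
  fixes X Y :: real
  assumes c: "c < m" and S: "S \<subseteq> {..<k}"
  shows "(\<Sum>c'<m. \<Sum>i<k. lc / real k * ((if c' = c \<and> i \<in> S then X else Y) - Y))
     = real (card S) * lc / real k * (X - Y)"
proof -
  have "(\<Sum>c'<m. \<Sum>i<k. lc / real k * ((if c' = c \<and> i \<in> S then X else Y) - Y))
      = (\<Sum>c'<m. if c' = c then (\<Sum>i<k. if i \<in> S then lc / real k * (X - Y) else 0) else 0)"
  proof (rule sum.cong[OF refl])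
    fix c' show "(\<Sum>i<k. lc / real k * ((if c' = c \<and> i \<in> S then X else Y) - Y)) = (if c' = c then (\<Sum>i<k. if i \<in> S then lc / real k * (X - Y) else 0) else 0)"
    proof (cases "c' = c")
      case True then show ?thesis by (simp, intro sum.cong) auto
    qed simp
  qed
  also have "\<dots> = (\<Sum>i<k. if i \<in> S then lc / real k * (X - Y) else 0)"
    using c by (simp add: sum.delta)
  also have "\<dots> = (\<Sum>i\<in>{i\<in>{..<k}. i \<in> S}. lc / real k * (X - Y))"
    by (rule sum.inter_filter[symmetric]) simp
  also have "{i\<in>{..<k}. i \<in> S} = S" using S by auto
  finally show ?thesis by simp
qed

lemma G_sum:
  fixes Y :: real and Z :: "nat \<Rightarrow> real"
  assumes c: "c < m" and S: "S \<subseteq> {..<k}"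
  shows "(\<Sum>c'<m. \<Sum>i<k. \<Sum>j\<in>{..<k}-{i}. lg c' i j * ((if c' = c \<and> j \<in> S \<and> i \<notin> S then Z i else Y) - Y))
     = (\<Sum>i\<in>nbrs lg k c S. lam_in lg c i S * (Z i - Y))"
proof -
  have "(\<Sum>c'<m. \<Sum>i<k. \<Sum>j\<in>{..<k}-{i}. lg c' i j * ((if c' = c \<and> j \<in> S \<and> i \<notin> S then Z i else Y) - Y))
      = (\<Sum>c'<m. if c' = c then (\<Sum>i<k. \<Sum>j\<in>{..<k}-{i}. lg c i j * ((if j \<in> S \<and> i \<notin> S then Z i else Y) - Y)) else 0)"
  proof (rule sum.cong[OF refl])
    fix c' show "(\<Sum>i<k. \<Sum>j\<in>{..<k}-{i}. lg c' i j * ((if c' = c \<and> j \<in> S \<and> i \<notin> S then Z i else Y) - Y)) = (if c' = c then (\<Sum>i<k. \<Sum>j\<in>{..<k}-{i}. lg c i j * ((if j \<in> S \<and> i \<notin> S then Z i else Y) - Y)) else 0)"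
      by (cases "c' = c") simp_all
  qed
  also have "\<dots> = (\<Sum>i<k. \<Sum>j\<in>{..<k}-{i}. lg c i j * ((if j \<in> S \<and> i \<notin> S then Z i else Y) - Y))"
    using c by (simp add: sum.delta)
  also have "\<dots> = (\<Sum>i<k. if i \<notin> S then lam_in lg c i S * (Z i - Y) else 0)"
  proof (rule sum.cong)
    fix i assume i: "i \<in> {..<k}"
    show "(\<Sum>j\<in>{..<k}-{i}. lg c i j * ((if j \<in> S \<and> i \<notin> S then Z i else Y) - Y))
        = (if i \<notin> S then lam_in lg c i S * (Z i - Y) else 0)"
    proof (cases "i \<in> S")
      case True then show ?thesis by simp
    next
      case False
      have "(\<Sum>j\<in>{..<k}-{i}. lg c i j * ((if j \<in> S \<and> i \<notin> S then Z i else Y) - Y))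
          = (\<Sum>j\<in>{..<k}-{i}. if j \<in> S then lg c i j * (Z i - Y) else 0)"
        using False by (intro sum.cong) auto
      also have "\<dots> = (\<Sum>j\<in>{j\<in>{..<k}-{i}. j \<in> S}. lg c i j * (Z i - Y))"
        by (rule sum.inter_filter[symmetric]) simp
      also have "{j\<in>{..<k}-{i}. j \<in> S} = S" using S False by auto
      finally show ?thesis using False by (simp add: lam_in_def sum_distrib_right)
    qed
  qed simp
  also have "\<dots> = (\<Sum>i\<in>{i\<in>{..<k}. i \<notin> S}. lam_in lg c i S * (Z i - Y))"
    by (rule sum.inter_filter[symmetric]) simp
  also have "\<dots> = (\<Sum>i\<in>nbrs lg k c S. lam_in lg c i S * (Z i - Y))"
  proof (rule sum.mono_neutral_right)
    show "\<forall>i\<in>{i\<in>{..<k}. i \<notin> S} - nbrs lg k c S. lam_in lg c i S * (Z i - Y) = 0"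
    proof
      fix i assume i: "i \<in> {i\<in>{..<k}. i \<notin> S} - nbrs lg k c S"
      then have "\<not> lam_in lg c i S > 0" unfolding nbrs_def by blast
      then have "lam_in lg c i S = 0" using lam_nonneg[of c i S] by linarith
      then show "lam_in lg c i S * (Z i - Y) = 0" by simp
    qed
  qed (simp_all add: nbrs_def subset_iff)
  finally show ?thesis .
qed

definition "dS c S = le + real (card S) * lc / real k + (\<Sum>i\<in>nbrs lg k c S. lam_in lg c i S)"

lemma set_T:
  assumes c: "c < m" and S: "S \<subseteq> {..<k}" and s: "inv_st s"
  shows "T (set_fresh c S) s = (1 - dS c S / L) * set_fresh c S s
     + real (card S) * lc / real k / L * head_fresh c s
     + (\<Sum>i\<in>nbrs lg k c S. lam_in lg c i S / L * set_fresh c (S \<union> {i}) s)"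
proof -
  have D: "(\<Sum>e\<in>events m k. r e * (set_fresh c S (act e s) - set_fresh c S s))
      = le * (0 - set_fresh c S s) + real (card S) * lc / real k * (head_fresh c s - set_fresh c S s)
        + (\<Sum>i\<in>nbrs lg k c S. lam_in lg c i S * (set_fresh c (S \<union> {i}) s - set_fresh c S s))"
    unfolding events_sum sf_act[OF s] rate.simps HN_sum[OF c S] G_sum[OF c S] by simp
  have E: "(\<Sum>i\<in>nbrs lg k c S. lam_in lg c i S * (set_fresh c (S \<union> {i}) s - set_fresh c S s))
     = (\<Sum>i\<in>nbrs lg k c S. lam_in lg c i S * set_fresh c (S \<union> {i}) s) - (\<Sum>i\<in>nbrs lg k c S. lam_in lg c i S) * set_fresh c S s"
    by (simp add: right_diff_distrib sum_subtractf sum_distrib_right)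
  have F: "(\<Sum>i\<in>nbrs lg k c S. lam_in lg c i S / L * set_fresh c (S \<union> {i}) s)
     = (\<Sum>i\<in>nbrs lg k c S. lam_in lg c i S * set_fresh c (S \<union> {i}) s) / L"
    by (simp add: sum_divide_distrib)
  show ?thesis unfolding T_delta D E F dS_def by (rule alg[OF L_pos])
qed

lemma dS_le:
  assumes c: "c < m" and S: "S \<subseteq> {..<k}"
  shows "dS c S \<le> L" "dS c S > 0"
proof -
  have L: "L = le + (\<Sum>c'<m. ls / real m) + (\<Sum>c'<m. \<Sum>i<k. lc / real k)
     + (\<Sum>c'<m. \<Sum>i<k. \<Sum>j\<in>{..<k}-{i}. lg c' i j)"
    unfolding total_rate_def events_sum by simp
  have cS: "card S \<le> k" using S by (metis card_lessThan card_mono finite_lessThan)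
  have 1: "real (card S) * lc / real k \<le> (\<Sum>c'<m. \<Sum>i<k. lc / real k)"
  proof -
    have "real (card S) * lc / real k \<le> real k * lc / real k"
      using cS lc k by (intro divide_right_mono mult_right_mono) auto
    also have "\<dots> \<le> real m * (real k * (lc / real k))" using m k lc by simp
    finally show ?thesis by simp
  qed
  have 2: "(\<Sum>i\<in>nbrs lg k c S. lam_in lg c i S) \<le> (\<Sum>c'<m. \<Sum>i<k. \<Sum>j\<in>{..<k}-{i}. lg c' i j)"
  proof -
    have "(\<Sum>i\<in>nbrs lg k c S. lam_in lg c i S) \<le> (\<Sum>i\<in>nbrs lg k c S. \<Sum>j\<in>{..<k}-{i}. lg c i j)"
      unfolding lam_in_def
      by (rule sum_mono, rule sum_mono2) (use S lg in \<open>auto simp: nbrs_def\<close>)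
    also have "\<dots> \<le> (\<Sum>i<k. \<Sum>j\<in>{..<k}-{i}. lg c i j)"
      by (rule sum_mono2) (auto simp: nbrs_def lg intro: sum_nonneg)
    also have "\<dots> \<le> (\<Sum>c'<m. \<Sum>i<k. \<Sum>j\<in>{..<k}-{i}. lg c' i j)"
      using c by (intro member_le_sum[where f = "\<lambda>c'. \<Sum>i<k. \<Sum>j\<in>{..<k}-{i}. lg c' i j"]) (auto simp: lg intro!: sum_nonneg)
    finally show ?thesis .
  qed
  have 3: "0 \<le> (\<Sum>c'<m. ls / real m)" using ls by (simp add: sum_nonneg)
  show "dS c S \<le> L" unfolding dS_def L using 1 2 3 by linarith
  show "dS c S > 0" unfolding dS_def using le lc k lam_nonneg
    by (intro add_pos_nonneg) (auto intro!: sum_nonneg)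
qed


lemma T_add: "T (\<lambda>s. f s + g s) = (\<lambda>s. T f s + T g s)"
  using T_lin[of 1 f 1 g] by simp

lemma T_scale: "T (\<lambda>s. a * f s) = (\<lambda>s. a * T f s)"
  using T_lin[of a f 0 f] by simp

lemma Tn_add: "(T ^^ n) (\<lambda>s. f s + g s) = (\<lambda>s. (T ^^ n) f s + (T ^^ n) g s)"
  using Tn_lin[of n 1 f 1 g] by simp

lemma Tn_scale: "(T ^^ n) (\<lambda>s. a * f s) = (\<lambda>s. a * (T ^^ n) f s)"
  using Tn_lin[of n a f 0 f] by simp

lemma L_ge: "le + ls / real m \<le> L"
proof -
  have L: "L = le + (\<Sum>c'<m. ls / real m) + (\<Sum>c'<m. \<Sum>i<k. lc / real k)
     + (\<Sum>c'<m. \<Sum>i<k. \<Sum>j\<in>{..<k}-{i}. lg c' i j)"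
    unfolding total_rate_def events_sum by simp
  have 1: "(\<Sum>c'<m. ls / real m) = ls" using m by simp
  have 2: "0 \<le> (\<Sum>c'<m. \<Sum>i<k. lc / real k)" using lc by (simp add: sum_nonneg)
  have 3: "0 \<le> (\<Sum>c'<m. \<Sum>i<k. \<Sum>j\<in>{..<k}-{i}. lg c' i j)" by (intro sum_nonneg) (simp add: lg)
  have "ls / real m \<le> ls" using m ls by (simp add: divide_le_eq_1 field_simps)
  then show ?thesis unfolding L 1 using 2 3 by linarith
qed

lemma head_rec:
  assumes c: "c < m"
  shows "(T ^^ Suc n) (head_fresh c) init_state
      = (1 - (le + ls / m) / L) * (T ^^ n) (head_fresh c) init_state + ls / (m * L)"
proof -
  have "(T ^^ Suc n) (head_fresh c) init_state = (T ^^ n) (T (head_fresh c)) init_state"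
    by (simp only: funpow_Suc_right o_apply)
  also have "\<dots> = (T ^^ n) (\<lambda>s. (1 - (le + ls / m) / L) * head_fresh c s + ls / (m * L)) init_state"
    by (rule Tn_cong) (auto simp: head_T[OF c] inv_init)
  also have "\<dots> = (1 - (le + ls / m) / L) * (T ^^ n) (head_fresh c) init_state + ls / (m * L)"
    by (simp only: Tn_add Tn_scale Tn_const)
  finally show ?thesis .
qed

lemma head_lim:
  assumes c: "c < m"
  shows "(\<lambda>n. (T ^^ n) (head_fresh c) init_state) \<longlonglongrightarrow> ls / (ls + real m * le)"
proof -
  have "(\<lambda>n. (T ^^ n) (head_fresh c) init_state) \<longlonglongrightarrow> (ls / (m * L)) / (1 - (1 - (le + ls / m) / L))"
  proof (rule rec_lim)
    show "0 \<le> 1 - (le + ls / real m) / L" using L_ge L_pos by simp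
    show "1 - (le + ls / real m) / L < 1" using L_pos le ls m by (simp add: add_pos_pos)
  qed (rule head_rec[OF c], rule tendsto_const)
  also have "(ls / (m * L)) / (1 - (1 - (le + ls / m) / L)) = ls / (ls + real m * le)"
    using L_pos m le ls by (simp add: field_simps)
  finally show ?thesis .
qed

lemma set_rec:
  assumes c: "c < m" and S: "S \<subseteq> {..<k}"
  shows "(T ^^ Suc n) (set_fresh c S) init_state
      = (1 - dS c S / L) * (T ^^ n) (set_fresh c S) init_state
        + (real (card S) * lc / real k / L * (T ^^ n) (head_fresh c) init_state
        + (\<Sum>i\<in>nbrs lg k c S. lam_in lg c i S / L * (T ^^ n) (set_fresh c (S \<union> {i})) init_state))"
proof -
  have "(T ^^ Suc n) (set_fresh c S) init_state = (T ^^ n) (T (set_fresh c S)) init_state"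
    by (simp only: funpow_Suc_right o_apply)
  also have "\<dots> = (T ^^ n) (\<lambda>s. (1 - dS c S / L) * set_fresh c S s
     + (real (card S) * lc / real k / L * head_fresh c s
     + (\<Sum>i\<in>nbrs lg k c S. lam_in lg c i S / L * set_fresh c (S \<union> {i}) s))) init_state"
    by (rule Tn_cong) (auto simp: set_T[OF c S] inv_init)
  also have "\<dots> = (1 - dS c S / L) * (T ^^ n) (set_fresh c S) init_state
        + (real (card S) * lc / real k / L * (T ^^ n) (head_fresh c) init_state
        + (\<Sum>i\<in>nbrs lg k c S. lam_in lg c i S / L * (T ^^ n) (set_fresh c (S \<union> {i})) init_state))"
    by (simp only: Tn_add Tn_scale Tn_sum)
  finally show ?thesis .
qed

lemma expect_lim:
  assumes "(\<lambda>n. (T ^^ n) g init_state) \<longlonglongrightarrow> X"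
  shows "((\<lambda>t. expect_at le ls lc lg m k t g) \<longlongrightarrow> X) at_top"
  unfolding expect_at_def Let_def by (rule poisson_lim[OF L_pos assms])

lemma set_lim_aux:
  assumes c: "c < m" and S: "S \<subseteq> {..<k}"
    and IH: "\<And>i. i \<in> nbrs lg k c S \<Longrightarrow> (\<lambda>n. (T ^^ n) (set_fresh c (S \<union> {i})) init_state) \<longlonglongrightarrow> F_set le ls lc lg m k c (S \<union> {i})"
  shows "(\<lambda>n. (T ^^ n) (set_fresh c S) init_state) \<longlonglongrightarrow>
     (real (card S) * lc / real k * (ls / (ls + real m * le))
               + (\<Sum>i\<in>nbrs lg k c S. lam_in lg c i S * F_set le ls lc lg m k c (S \<union> {i})))
            / dS c S"
proof -
  define U where "U = real (card S) * lc / real k / L * (ls / (ls + real m * le))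
        + (\<Sum>i\<in>nbrs lg k c S. lam_in lg c i S / L * F_set le ls lc lg m k c (S \<union> {i}))"
  have "(\<lambda>n. (T ^^ n) (set_fresh c S) init_state) \<longlonglongrightarrow> U / (1 - (1 - dS c S / L))"
  proof (rule rec_lim)
    show "0 \<le> 1 - dS c S / L" using dS_le[OF c S] L_pos by simp
    show "1 - dS c S / L < 1" using dS_le[OF c S] L_pos by simp
    show "(\<lambda>n. real (card S) * lc / real k / L * (T ^^ n) (head_fresh c) init_state
        + (\<Sum>i\<in>nbrs lg k c S. lam_in lg c i S / L * (T ^^ n) (set_fresh c (S \<union> {i})) init_state)) \<longlonglongrightarrow> U"
      unfolding U_def by (intro tendsto_add tendsto_mult tendsto_const head_lim[OF c] tendsto_sum IH)
  qed (rule set_rec[OF c S])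
  also have "U / (1 - (1 - dS c S / L)) = (real (card S) * lc / real k * (ls / (ls + real m * le))
               + (\<Sum>i\<in>nbrs lg k c S. lam_in lg c i S * F_set le ls lc lg m k c (S \<union> {i}))) / dS c S"
  proof -
    have "U = (real (card S) * lc / real k * (ls / (ls + real m * le))
               + (\<Sum>i\<in>nbrs lg k c S. lam_in lg c i S * F_set le ls lc lg m k c (S \<union> {i}))) / L"
      unfolding U_def by (simp add: add_divide_distrib sum_divide_distrib)
    then show ?thesis using L_pos dS_le[OF c S] by (simp add: field_simps)
  qed
  finally show ?thesis .
qed

lemma set_lim:
  assumes c: "c < m"
  shows "S \<subseteq> {..<k} \<Longrightarrow> (\<lambda>n. (T ^^ n) (set_fresh c S) init_state) \<longlonglongrightarrow> F_set le ls lc lg m k c S"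
proof (induction "card ({..<k} - S)" arbitrary: S rule: less_induct)
  case (less S)
  have IH: "(\<lambda>n. (T ^^ n) (set_fresh c (S \<union> {i})) init_state) \<longlonglongrightarrow> F_set le ls lc lg m k c (S \<union> {i})"
    if i: "i \<in> nbrs lg k c S" for i
  proof (rule less.hyps)
    have "{..<k} - (S \<union> {i}) \<subset> {..<k} - S" using i unfolding nbrs_def by auto
    then show "card ({..<k} - (S \<union> {i})) < card ({..<k} - S)" by (intro psubset_card_mono) auto
    show "S \<union> {i} \<subseteq> {..<k}" using i less.prems unfolding nbrs_def by auto
  qed
  let ?X = "(real (card S) * lc / real k * (ls / (ls + real m * le))
               + (\<Sum>i\<in>nbrs lg k c S. lam_in lg c i S * F_set le ls lc lg m k c (S \<union> {i}))) / dS c S"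
  from set_lim_aux[OF c less.prems IH] have lim: "(\<lambda>n. (T ^^ n) (set_fresh c S) init_state) \<longlonglongrightarrow> ?X" .
  have "F_set le ls lc lg m k c S = ?X"
    using tendsto_Lim[OF trivial_limit_at_top_linorder expect_lim[OF lim]] unfolding F_set_def .
  with lim show ?case by simp
qed

end

theorem theorem5:
  fixes le ls lc :: real and lg :: "nat \<Rightarrow> nat \<Rightarrow> nat \<Rightarrow> real" and m k c :: nat
  assumes "le > 0" and "ls > 0" and "lc > 0"
    and "\<And>c' i j. lg c' i j \<ge> 0"
    and "m > 0" and "k > 0" and "c < m"
  shows "((\<lambda>t. expect_at le ls lc lg m k t (head_fresh c)) \<longlongrightarrow> F_head le ls lc lg m k c) at_top
     \<and> F_head le ls lc lg m k c = ls / (ls + real m * le)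
     \<and> (\<forall>S. S \<noteq> {} \<and> S \<subseteq> {..<k} \<longrightarrow>
          ((\<lambda>t. expect_at le ls lc lg m k t (set_fresh c S)) \<longlongrightarrow> F_set le ls lc lg m k c S) at_top
        \<and> F_set le ls lc lg m k c S =
            (real (card S) * lc / real k * F_head le ls lc lg m k c
               + (\<Sum>i\<in>nbrs lg k c S. lam_in lg c i S * F_set le ls lc lg m k c (S \<union> {i})))
            / (le + real (card S) * lc / real k + (\<Sum>i\<in>nbrs lg k c S. lam_in lg c i S)))"
proof -
  interpret net le ls lc lg m k using assms by unfold_locales auto
  have c: "c < m" by fact
  have hl: "((\<lambda>t. expect_at le ls lc lg m k t (head_fresh c)) \<longlongrightarrow> ls / (ls + real m * le)) at_top"
    by (rule expect_lim[OF head_lim[OF c]])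
  have Fh: "F_head le ls lc lg m k c = ls / (ls + real m * le)"
    unfolding F_head_def by (rule tendsto_Lim[OF trivial_limit_at_top_linorder hl])
  have S: "((\<lambda>t. expect_at le ls lc lg m k t (set_fresh c S)) \<longlongrightarrow> F_set le ls lc lg m k c S) at_top
        \<and> F_set le ls lc lg m k c S =
            (real (card S) * lc / real k * F_head le ls lc lg m k c
               + (\<Sum>i\<in>nbrs lg k c S. lam_in lg c i S * F_set le ls lc lg m k c (S \<union> {i})))
            / (le + real (card S) * lc / real k + (\<Sum>i\<in>nbrs lg k c S. lam_in lg c i S))"
    if S: "S \<subseteq> {..<k}" for S
  proof
    show "((\<lambda>t. expect_at le ls lc lg m k t (set_fresh c S)) \<longlongrightarrow> F_set le ls lc lg m k c S) at_top"
      by (rule expect_lim[OF set_lim[OF c S]])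
    have IH: "\<And>i. i \<in> nbrs lg k c S \<Longrightarrow> (\<lambda>n. (T ^^ n) (set_fresh c (S \<union> {i})) init_state) \<longlonglongrightarrow> F_set le ls lc lg m k c (S \<union> {i})"
      using S by (intro set_lim[OF c]) (auto simp: nbrs_def)
    have "F_set le ls lc lg m k c S = (real (card S) * lc / real k * (ls / (ls + real m * le))
               + (\<Sum>i\<in>nbrs lg k c S. lam_in lg c i S * F_set le ls lc lg m k c (S \<union> {i}))) / dS c S"
      using LIMSEQ_unique[OF set_lim[OF c S] set_lim_aux[OF c S IH]] .
    then show "F_set le ls lc lg m k c S =
            (real (card S) * lc / real k * F_head le ls lc lg m k c
               + (\<Sum>i\<in>nbrs lg k c S. lam_in lg c i S * F_set le ls lc lg m k c (S \<union> {i})))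
            / (le + real (card S) * lc / real k + (\<Sum>i\<in>nbrs lg k c S. lam_in lg c i S))"
      unfolding Fh dS_def .
  qed
  have hl': "((\<lambda>t. expect_at le ls lc lg m k t (head_fresh c)) \<longlongrightarrow> F_head le ls lc lg m k c) at_top"
    using hl unfolding Fh .
  show ?thesis using hl' Fh S by blast
qed

end
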